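(* There exists a constant $c>0$ not depending on $n$ such that $\theta_n(B_n)>c\sqrt n$ for all $n\in\mathbb{N}$. In particular this holds with $$c=\frac{\sqrt[3]{\pi}}{\sqrt{12e}\cdot\sqrt[6]{3}}=0.2135\ldots$$
   Context: $B_n=\{x\in\mathbb{R}^n:\|x\|\le1\}$ (Euclidean norm). $C(B_n)$ is the space of continuous real functions on $B_n$ with the max norm; $\Pi_1(\mathbb{R}^n)$ is the set of polynomials in $n$ variables of degree at most $1$. For a nondegenerate simplex $S\subset B_n$ with vertices $x^{(1)},\dots,x^{(n+1)}$, the corresponding interpolation projector $P:C(B_n)\to\Pi_1(\mathbb{R}^n)$ is defined by $Pf(x^{(j)})=f(x^{(j)})$, and $\|P\|_{B_n}$ is its operator norm on $C(B_n)$ (equivalently $\max_{x\in B_n}\sum_j|\lambda_j(x)|$ with $\lambda_j(x)$ the barycentric coordinates of $x$ with respect to $S$). $\theta_n(B_n)$ is the minimal value of $\|P\|_{B_n}$ over all nondegenerate simplices with vertices in $B_n$. *)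

theory Defs
  imports "HOL-Analysis.Analysis"
begin

text \<open>Points of R^n are vectors of type real^'n, with n = CARD('n).
  The unit ball B_n is cball 0 1. A simplex is given by its vertices
  v 0, ..., v n (n = CARD('n)).\<close>

definition Pi1 :: "(real^'n \<Rightarrow> real) set" where
  "Pi1 = {p. \<exists>a b. \<forall>x. p x = a \<bullet> x + b}"

definition nondeg_simplex :: "(nat \<Rightarrow> real^'n) \<Rightarrow> bool" where
  "nondeg_simplex v \<longleftrightarrow> inj_on v {0..CARD('n)} \<and>
     \<not> affine_dependent (v ` {0..CARD('n)})"

definition interp_proj :: "(nat \<Rightarrow> real^'n) \<Rightarrow> (real^'n \<Rightarrow> real) \<Rightarrow> (real^'n \<Rightarrow> real)" where
  "interp_proj v f = (THE p. p \<in> Pi1 \<and> (\<forall>j\<le>CARD('n). p (v j) = f (v j)))"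

definition proj_norm :: "(nat \<Rightarrow> real^'n) \<Rightarrow> real" where
  "proj_norm v = Sup {\<bar>interp_proj v f x\<bar> | f x.
      continuous_on (cball 0 1) f \<and> (\<forall>y\<in>cball 0 1. \<bar>f y\<bar> \<le> 1) \<and> x \<in> cball (0::real^'n) 1}"

definition theta :: "('n::finite) itself \<Rightarrow> real" where
  "theta _ = Inf {proj_norm v | v :: nat \<Rightarrow> real^('n::finite).
      nondeg_simplex v \<and> (\<forall>j\<le>CARD('n). v j \<in> cball 0 1)}"

end

theory Submission
  imports Defs
begin


lemma nd_indep:
  fixes v :: "nat \<Rightarrow> real^'n"
  assumes "nondeg_simplex v"
  shows "independent ((\<lambda>x. - v 0 + x) ` v ` {1..CARD('n)})"
    and "inj_on (\<lambda>k. - v 0 + v k) {1..CARD('n)}"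
proof -
  let ?N = "CARD('n)"
  have inj: "inj_on v {0..?N}" and nd: "\<not> affine_dependent (v ` {0..?N})"
    using assms unfolding nondeg_simplex_def by auto
  have "v 0 \<notin> v ` {1..?N}"
  proof
    assume "v 0 \<in> v ` {1..?N}"
    then obtain x where x: "x \<in> {1..?N}" "v 0 = v x" by auto
    hence "0 = x" using inj_onD[OF inj] by auto
    with x show False by auto
  qed
  moreover have "{0..?N} = insert 0 {1..?N}" by auto
  hence "v ` {0..?N} = insert (v 0) (v ` {1..?N})" by simp
  ultimately show "independent ((\<lambda>x. - v 0 + x) ` v ` {1..CARD('n)})"
    using nd affine_dependent_iff_dependent by metis
  show "inj_on (\<lambda>k. - v 0 + v k) {1..CARD('n)}"
    using inj by (auto simp: inj_on_def)
qed

lemma affine_zero: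
  fixes v :: "nat \<Rightarrow> real^'n"
  assumes "nondeg_simplex v" and h: "\<forall>k\<le>CARD('n). a \<bullet> v k + b = 0"
  shows "a = 0 \<and> b = 0"
proof -
  let ?N = "CARD('n)"
  let ?B = "(\<lambda>x. - v 0 + x) ` v ` {1..?N}"
  have ind: "independent ?B" and inj: "inj_on (\<lambda>k. - v 0 + v k) {1..?N}"
    using nd_indep[OF assms(1)] by auto
  have "?B = (\<lambda>k. - v 0 + v k) ` {1..?N}" by auto
  hence cB: "card ?B = ?N" using card_image[OF inj] by simp
  have "UNIV \<subseteq> span ?B"
    by (rule card_ge_dim_independent) (use ind cB in auto)
  moreover have "?B \<subseteq> {x. a \<bullet> x = 0}"
  proof
    fix x assume "x \<in> ?B"
    then obtain k where k: "k \<in> {1..?N}" "x = - v 0 + v k" by auto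
    have "a \<bullet> v k + b = 0" "a \<bullet> v 0 + b = 0" using h k by auto
    then show "x \<in> {x. a \<bullet> x = 0}" using k by (simp add: inner_diff_right)
  qed
  hence "span ?B \<subseteq> {x. a \<bullet> x = 0}" by (rule span_minimal) (rule subspace_hyperplane)
  ultimately have "a \<in> {x. a \<bullet> x = 0}" by blast
  hence "a = 0" by simp
  with h show ?thesis by auto
qed


lemma lin_repr:
  fixes g :: "'a::euclidean_space \<Rightarrow> real"
  assumes "linear g"
  shows "g x = (\<Sum>i\<in>Basis. g i *\<^sub>R i) \<bullet> x"
proof -
  have "g x = g (\<Sum>i\<in>Basis. (x \<bullet> i) *\<^sub>R i)" by (simp add: euclidean_representation)
  also have "\<dots> = (\<Sum>i\<in>Basis. (x \<bullet> i) * g i)"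
    using assms by (simp add: linear_sum linear_scale)
  also have "\<dots> = (\<Sum>i\<in>Basis. g i *\<^sub>R i) \<bullet> x"
    unfolding inner_sum_left by (rule sum.cong) (auto simp: inner_commute)
  finally show ?thesis .
qed
lemma affine_exists:
  fixes v :: "nat \<Rightarrow> real^'n"
  assumes "nondeg_simplex v"
  shows "\<exists>a b. \<forall>k\<le>CARD('n). a \<bullet> v k + b = t k"
proof -
  let ?N = "CARD('n)"
  let ?B = "(\<lambda>x. - v 0 + x) ` v ` {1..?N}"
  have ind: "independent ?B" and inj: "inj_on (\<lambda>k. - v 0 + v k) {1..?N}"
    using nd_indep[OF assms(1)] by auto
  define h where "h w = t (THE k. k \<in> {1..?N} \<and> w = - v 0 + v k) - t 0" for w
  obtain g :: "real^'n \<Rightarrow> real" where g: "linear g" "\<forall>x\<in>?B. g x = h x"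
    using linear_independent_extend[OF ind] by blast
  define a where "a = (\<Sum>i\<in>Basis. g i *\<^sub>R i)"
  have ga: "g x = a \<bullet> x" for x unfolding a_def by (rule lin_repr[OF g(1)])
  have "a \<bullet> v k + (t 0 - a \<bullet> v 0) = t k" if "k \<le> ?N" for k
  proof (cases "k = 0")
    case True then show ?thesis by simp
  next
    case False
    hence k: "k \<in> {1..?N}" using that by auto
    have "(THE k'. k' \<in> {1..?N} \<and> - v 0 + v k = - v 0 + v k') = k"
    proof (rule the_equality)
      fix k' assume "k' \<in> {1..?N} \<and> - v 0 + v k = - v 0 + v k'"
      thus "k' = k" using inj_onD[OF inj, of k' k] k by auto
    qed (use k in auto)
    hence "h (- v 0 + v k) = t k - t 0" unfolding h_def by simp
    moreover have "- v 0 + v k \<in> ?B" using k by auto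
    ultimately have "g (- v 0 + v k) = t k - t 0" using g(2) by auto
    thus ?thesis unfolding ga by (simp add: inner_diff_right)
  qed
  thus ?thesis by (intro exI[of _ a] exI[of _ "t 0 - a \<bullet> v 0"]) blast
qed

lemma interp_eq:
  fixes v :: "nat \<Rightarrow> real^'n"
  assumes nd: "nondeg_simplex v" and "q \<in> Pi1" and "\<forall>j\<le>CARD('n). q (v j) = f (v j)"
  shows "interp_proj v f = q"
  unfolding interp_proj_def
proof (rule the_equality)
  show "q \<in> Pi1 \<and> (\<forall>j\<le>CARD('n). q (v j) = f (v j))" using assms by auto
  fix p assume p: "p \<in> Pi1 \<and> (\<forall>j\<le>CARD('n). p (v j) = f (v j))"
  obtain a b where ab: "\<forall>x. p x = a \<bullet> x + b" using p unfolding Pi1_def by auto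
  obtain c d where cd: "\<forall>x. q x = c \<bullet> x + d" using assms(2) unfolding Pi1_def by auto
  have "\<forall>k\<le>CARD('n). (a - c) \<bullet> v k + (b - d) = 0"
  proof (intro allI impI)
    fix k assume k: "k \<le> CARD('n)"
    have "(a - c) \<bullet> v k + (b - d) = p (v k) - q (v k)" using ab cd by (simp add: inner_diff_left)
    also have "\<dots> = 0" using p assms(3) k by simp
    finally show "(a - c) \<bullet> v k + (b - d) = 0" .
  qed
  from affine_zero[OF nd this] have "a = c" "b = d" by auto
  thus "p = q" using ab cd by auto
qed

primrec ps :: "(nat \<Rightarrow> 'a::real_inner) \<Rightarrow> nat \<Rightarrow> 'a" where
  "ps a 0 = 0"
| "ps a (Suc k) = ps a k + (if ps a k \<bullet> a k \<ge> 0 then a k else - a k)"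

definition sgn_at :: "(nat \<Rightarrow> 'a::real_inner) \<Rightarrow> nat \<Rightarrow> real" where
  "sgn_at a j = (if ps a j \<bullet> a j \<ge> 0 then 1 else -1)"

lemma ps_sum: "ps a k = (\<Sum>j<k. sgn_at a j *\<^sub>R a j)"
  by (induction k) (auto simp: sgn_at_def)

lemma ps_norm: "(\<Sum>j<k. (norm (a j))\<^sup>2) \<le> (norm (ps a k))\<^sup>2"
proof (induction k)
  case 0 then show ?case by simp
next
  case (Suc k)
  let ?x = "ps a k" and ?y = "if ps a k \<bullet> a k \<ge> 0 then a k else - a k"
  have xy: "?x \<bullet> ?y \<ge> 0" by auto
  have ny: "norm ?y = norm (a k)" by auto
  have "(norm (?x + ?y))\<^sup>2 = (norm ?x)\<^sup>2 + 2 * (?x \<bullet> ?y) + (norm ?y)\<^sup>2"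
    by (simp add: power2_norm_eq_inner inner_add_left inner_add_right inner_commute)
  then show ?case using Suc xy ny by simp
qed

lemma proj_norm_lb:
  fixes v :: "nat \<Rightarrow> real^'n"
  assumes nd: "nondeg_simplex v" and vb: "\<forall>j\<le>CARD('n). v j \<in> cball 0 1"
  shows "sqrt (real CARD('n) + 1) / 2 \<le> proj_norm v"
proof -
  let ?N = "CARD('n)"
  have "\<forall>j. \<exists>a b. \<forall>k\<le>?N. a \<bullet> v k + b = (if k = j then 1 else 0)"
    by (intro allI) (rule affine_exists[OF nd])
  then obtain la lb where lab: "\<forall>j. \<forall>k\<le>?N. la j \<bullet> v k + lb j = (if k = j then 1 else 0)"
    by metis
  have rep: "interp_proj v f = (\<lambda>x. \<Sum>j\<le>?N. f (v j) * (la j \<bullet> x + lb j))" for f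
  proof (rule interp_eq[OF nd])
    have "\<forall>x. (\<Sum>j\<le>?N. f (v j) * (la j \<bullet> x + lb j))
       = (\<Sum>j\<le>?N. f (v j) *\<^sub>R la j) \<bullet> x + (\<Sum>j\<le>?N. f (v j) * lb j)"
      by (simp add: inner_sum_left distrib_left sum.distrib)
    then show "(\<lambda>x. \<Sum>j\<le>?N. f (v j) * (la j \<bullet> x + lb j)) \<in> Pi1"
      unfolding Pi1_def by blast
    show "\<forall>k\<le>?N. (\<Sum>j\<le>?N. f (v j) * (la j \<bullet> v k + lb j)) = f (v k)"
    proof (intro allI impI)
      fix k assume k: "k \<le> ?N"
      have "(\<Sum>j\<le>?N. f (v j) * (la j \<bullet> v k + lb j)) = (\<Sum>j\<le>?N. if j = k then f (v j) else 0)"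
        using lab k by (intro sum.cong) auto
      also have "\<dots> = f (v k)" using k by (simp add: sum.delta)
      finally show "(\<Sum>j\<le>?N. f (v j) * (la j \<bullet> v k + lb j)) = f (v k)" .
    qed
  qed
  have N1: "1 \<le> ?N" by (simp add: Suc_leI)
  have la_ge: "1/2 \<le> norm (la j)" if j: "j \<le> ?N" for j
  proof -
    define m where "m = (if j = 0 then 1 else 0::nat)"
    have m: "m \<le> ?N" "m \<noteq> j" using N1 by (auto simp: m_def)
    have "la j \<bullet> v j + lb j = 1" "la j \<bullet> v m + lb j = 0" using lab j m by auto
    hence e1: "la j \<bullet> (v j - v m) = 1" by (simp add: inner_diff_right)
    have "norm (v j - v m) \<le> norm (v j) + norm (v m)" by (rule norm_triangle_ineq4)
    also have "\<dots> \<le> 2"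
    proof -
      have "norm (v j) \<le> 1" "norm (v m) \<le> 1" using vb j m(1) by auto
      thus ?thesis by linarith
    qed
    finally have d2: "norm (v j - v m) \<le> 2" .
    have "1 \<le> norm (la j) * norm (v j - v m)" using e1 norm_cauchy_schwarz[of "la j" "v j - v m"] by simp
    also have "\<dots> \<le> norm (la j) * 2" using d2 by (simp add: mult_left_mono)
    finally show ?thesis by simp
  qed
  define s where "s j = sgn_at la j" for j
  define A where "A = ps la (Suc ?N)"
  have A: "A = (\<Sum>j\<le>?N. s j *\<^sub>R la j)" unfolding A_def ps_sum s_def lessThan_Suc_atMost ..
  have "(\<Sum>j<Suc ?N. (1/2::real)\<^sup>2) \<le> (\<Sum>j<Suc ?N. (norm (la j))\<^sup>2)"
    using la_ge by (intro sum_mono power_mono) auto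
  also have "\<dots> \<le> (norm A)\<^sup>2" unfolding A_def by (rule ps_norm)
  finally have "(real ?N + 1) / 4 \<le> (norm A)\<^sup>2" by (simp add: power2_eq_square)
  hence "sqrt ((real ?N + 1) / 4) \<le> norm A" by (simp add: real_le_lsqrt)
  moreover have "sqrt ((real ?N + 1) / 4) = sqrt (real ?N + 1) / 2"
    by (simp add: real_sqrt_divide)
  ultimately have nA: "sqrt (real ?N + 1) / 2 \<le> norm A" by simp
  moreover have "0 < sqrt (real ?N + 1)" by (simp add: add_pos_nonneg)
  ultimately have Apos: "norm A > 0" by linarith
  define Bc where "Bc = (\<Sum>j\<le>?N. s j * lb j)"
  define p where "p x = (\<Sum>j\<le>?N. s j * (la j \<bullet> x + lb j))" for x
  have p_eq: "p x = A \<bullet> x + Bc" for x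
    unfolding p_def A Bc_def by (simp add: inner_sum_left distrib_left sum.distrib)
  have s1: "s k = 1 \<or> s k = -1" for k by (simp add: s_def sgn_at_def)
  have pv: "p (v k) = s k" if k: "k \<le> ?N" for k
  proof -
    have "p (v k) = (\<Sum>j\<le>?N. if j = k then s j else 0)"
      unfolding p_def using lab k by (intro sum.cong) auto
    also have "\<dots> = s k" using k by (simp add: sum.delta)
    finally show ?thesis .
  qed
  define f where "f y = max (-1) (min 1 (p y))" for y
  have fv: "f (v k) = s k" if "k \<le> ?N" for k
    using pv[OF that] s1[of k] unfolding f_def by auto
  have Pf: "interp_proj v f = p"
    unfolding rep p_def using fv by (intro ext sum.cong) auto
  have fc: "continuous_on (cball 0 1) f"
    unfolding f_def p_def by (intro continuous_intros)
  have fb: "\<forall>y\<in>cball 0 1. \<bar>f y\<bar> \<le> 1" unfolding f_def by auto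
  define x0 where "x0 = ((if Bc \<ge> 0 then 1 else -1) / norm A) *\<^sub>R A"
  have nx0: "norm x0 = 1" unfolding x0_def using Apos by auto
  have "A \<bullet> x0 = (if Bc \<ge> 0 then 1 else -1) / norm A * (A \<bullet> A)"
    unfolding x0_def by simp
  also have "A \<bullet> A = norm A * norm A" by (simp add: power2_norm_eq_inner[symmetric] power2_eq_square)
  finally have Ax0: "A \<bullet> x0 = (if Bc \<ge> 0 then norm A else - norm A)" using Apos by auto
  have px0: "norm A \<le> \<bar>p x0\<bar>" unfolding p_eq Ax0 by auto
  let ?S = "{\<bar>interp_proj v f x\<bar> | f x.
      continuous_on (cball 0 1) f \<and> (\<forall>y\<in>cball 0 1. \<bar>f y\<bar> \<le> 1) \<and> x \<in> cball (0::real^'n) 1}"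
  have mem: "\<bar>p x0\<bar> \<in> ?S"
    using fc fb nx0 Pf by (intro CollectI exI[of _ f] exI[of _ x0]) auto
  have bdd: "bdd_above ?S"
  proof (rule bdd_aboveI)
    fix r assume "r \<in> ?S"
    then obtain g x where r: "r = \<bar>interp_proj v g x\<bar>" and g: "\<forall>y\<in>cball 0 1. \<bar>g y\<bar> \<le> 1"
      and x: "x \<in> cball (0::real^'n) 1" by auto
    have "r \<le> (\<Sum>j\<le>?N. \<bar>g (v j) * (la j \<bullet> x + lb j)\<bar>)" unfolding r rep by (rule sum_abs)
    also have "\<dots> \<le> (\<Sum>j\<le>?N. norm (la j) + \<bar>lb j\<bar>)"
    proof (rule sum_mono)
      fix j assume j: "j \<in> {..?N}"
      have g1: "\<bar>g (v j)\<bar> \<le> 1" using g vb j by auto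
      have "\<bar>la j \<bullet> x\<bar> \<le> norm (la j) * norm x" by (rule Cauchy_Schwarz_ineq2)
      also have "\<dots> \<le> norm (la j)" using x by (simp add: mult_left_le)
      finally have "\<bar>la j \<bullet> x + lb j\<bar> \<le> norm (la j) + \<bar>lb j\<bar>" by linarith
      hence "\<bar>g (v j)\<bar> * \<bar>la j \<bullet> x + lb j\<bar> \<le> 1 * (norm (la j) + \<bar>lb j\<bar>)"
        using g1 by (intro mult_mono) auto
      thus "\<bar>g (v j) * (la j \<bullet> x + lb j)\<bar> \<le> norm (la j) + \<bar>lb j\<bar>" by (simp add: abs_mult)
    qed
    finally show "r \<le> (\<Sum>j\<le>?N. norm (la j) + \<bar>lb j\<bar>)" .
  qed
  have "\<bar>p x0\<bar> \<le> proj_norm v"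
    unfolding proj_norm_def by (rule cSup_upper[OF mem bdd])
  with nA px0 show ?thesis by linarith
qed

lemma cbound: "root 3 pi / (sqrt (12 * exp 1) * root 6 3) > 0 \<and> root 3 pi / (sqrt (12 * exp 1) * root 6 3) \<le> 1/2"
proof -
  have r3: "root 3 pi \<le> 2"
  proof -
    have "root 3 pi \<le> root 3 8" using pi_less_4 by (intro real_root_le_mono) auto
    also have "root 3 (8::real) = 2" by (rule real_root_pos_unique) auto
    finally show ?thesis .
  qed
  have e: "2 \<le> exp (1::real)" using exp_ge_add_one_self[of 1] by simp
  have s: "4 \<le> sqrt (12 * exp (1::real))" using e by (intro real_le_rsqrt) auto
  have "root 6 1 \<le> root 6 (3::real)" by (rule real_root_le_mono) auto
  hence r6: "1 \<le> root 6 (3::real)" by simp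
  have "4 * 1 \<le> sqrt (12 * exp 1) * root 6 3" using s r6 by (intro mult_mono) auto
  hence "sqrt (12 * exp 1) * root 6 3 \<ge> 4" by simp
  moreover have "root 3 pi > 0" by simp
  ultimately show ?thesis using r3 by (auto simp: divide_simps)
qed

lemma exists_simplex:
  "\<exists>v :: nat \<Rightarrow> real^'n. nondeg_simplex v \<and> (\<forall>j\<le>CARD('n). v j \<in> cball 0 1)"
proof -
  let ?N = "CARD('n)"
  obtain h :: "nat \<Rightarrow> 'n" where h: "bij_betw h {1..?N} UNIV"
    using ex_bij_betw_nat_finite_1[of "UNIV :: 'n set"] by auto
  have hinj: "inj_on h {1..?N}" using h by (rule bij_betw_imp_inj_on)
  define v :: "nat \<Rightarrow> real^'n" where "v k = (if k = 0 then 0 else axis (h k) 1)" for k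
  have inj: "inj_on v {0..?N}"
  proof (rule inj_onI)
    fix k l assume k: "k \<in> {0..?N}" and l: "l \<in> {0..?N}" and e: "v k = v l"
    show "k = l"
    proof (cases "k = 0 \<or> l = 0")
      case True then show ?thesis using e by (auto simp: v_def axis_eq_0_iff split: if_splits)
    next
      case False
      hence "axis (h k) (1::real) = axis (h l) 1" using e by (auto simp: v_def)
      hence "h k = h l" by (simp add: axis_eq_axis)
      thus ?thesis using inj_onD[OF hinj] k l False by auto
    qed
  qed
  have "{0..?N} = insert 0 {1..?N}" by auto
  hence "v ` {0..?N} = insert (v 0) (v ` {1..?N})" by simp
  moreover have "v 0 = 0" by (simp add: v_def)
  ultimately have vi: "v ` {0..?N} = insert 0 (v ` {1..?N})" by simp
  have z: "(0::real^'n) \<notin> v ` {1..?N}" by (auto simp: v_def axis_eq_0_iff)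
  have "v ` {1..?N} \<subseteq> Basis" by (auto simp: v_def)
  hence "independent (v ` {1..?N})" using independent_Basis independent_mono by blast
  moreover have "(\<lambda>x. - 0 + x) ` v ` {1..?N} = v ` {1..?N}" by simp
  ultimately have "\<not> affine_dependent (v ` {0..?N})"
    unfolding vi using affine_dependent_iff_dependent[OF z] by simp
  hence "nondeg_simplex v" using inj unfolding nondeg_simplex_def by simp
  moreover have "\<forall>j\<le>?N. v j \<in> cball 0 1" by (auto simp: v_def)
  ultimately show ?thesis by blast
qed

theorem theorem2:
  "root 3 pi / (sqrt (12 * exp 1) * root 6 3) > 0 \<and>
   theta TYPE('n::finite) > root 3 pi / (sqrt (12 * exp 1) * root 6 3) * sqrt (real CARD('n))"
proof -
  let ?c = "root 3 pi / (sqrt (12 * exp 1) * root 6 3)"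
  let ?N = "CARD('n)"
  have c: "?c > 0" "?c \<le> 1/2" using cbound by auto
  let ?S = "{proj_norm v | v :: nat \<Rightarrow> real^'n.
      nondeg_simplex v \<and> (\<forall>j\<le>CARD('n). v j \<in> cball 0 1)}"
  have ne: "?S \<noteq> {}" using exists_simplex by blast
  have "sqrt (real ?N + 1) / 2 \<le> Inf ?S"
  proof (rule cInf_greatest[OF ne])
    fix x assume "x \<in> ?S"
    then obtain v :: "nat \<Rightarrow> real^'n" where "x = proj_norm v" "nondeg_simplex v"
      "\<forall>j\<le>CARD('n). v j \<in> cball 0 1" by blast
    thus "sqrt (real ?N + 1) / 2 \<le> x" using proj_norm_lb by blast
  qed
  hence th: "sqrt (real ?N + 1) / 2 \<le> theta TYPE('n)" unfolding theta_def by simp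
  have "?c * sqrt (real ?N) \<le> 1/2 * sqrt (real ?N)" using c by (intro mult_right_mono) auto
  also have "\<dots> < sqrt (real ?N + 1) / 2" by simp
  finally show ?thesis using c th by linarith
qed
end
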